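(* Let $n\ge 1$, $\nu>0$, and let $\alpha_u,\alpha_y\ge 0$ with $\max\{\alpha_u,\alpha_y\}>0$. Let $M\in\mathbb{R}^{n\times n}$ be a diagonal matrix with positive diagonal entries, let $L\in\mathbb{R}^{n\times n}$, and let $\Pi_k\in\mathbb{R}^{n\times n}$ be a diagonal matrix whose diagonal entries all lie in $\{0,1\}$. Set $$\gamma_1=\frac{\alpha_y^2\nu}{\alpha_y^2\nu+\alpha_u^2},\qquad \gamma_2=\frac{\alpha_u^2}{\alpha_y^2\nu+\alpha_u^2},$$ $$\mathbb{S}_k=\nu LM^{-1}L^T+M-\frac{1}{\alpha_y^2\nu+\alpha_u^2}\,(\alpha_y\nu LM^{-1}-\alpha_u I)\,\Pi_k M\Pi_k\,(\alpha_y\nu LM^{-1}-\alpha_u I)^T,$$ $$L_1=\sqrt{\nu}\,L\,(I-\gamma_1\Pi_k)^{1/2}+(I-\gamma_2\Pi_k)^{1/2}M,\qquad \widehat{\mathbb{S}}_k=L_1M^{-1}L_1^T .$$ Then $$\widehat{\mathbb{S}}_k=\mathbb{S}_k+\sqrt{\nu}\,\big(L(I-\Pi_k)+(I-\Pi_k)L^T\big).$$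
   Context: Square roots of the diagonal matrices $I-\gamma_i\Pi_k$ (which have nonnegative diagonal entries since $0\le\gamma_i\le 1$) are taken entrywise. In the application, $M$ is a lumped mass matrix, $L$ the discretized convection–diffusion operator, and $\Pi_k$ the diagonal 0/1 indicator matrix of the current active set $\mathcal{A}_k\subseteq\{1,\dots,n\}$ (i.e. $(\Pi_k)_{ii}=1$ iff $i\in\mathcal{A}_k$); $\mathbb{S}_k$ is a block of the active-set Schur complement and $\widehat{\mathbb{S}}_k$ its factorized approximation. *)

theory Defs
  imports "HOL-Analysis.Analysis"
begin

definition diag_mat :: "real^'n^'n \<Rightarrow> bool" where
  "diag_mat A \<longleftrightarrow> (\<forall>i j. i \<noteq> j \<longrightarrow> A $ i $ j = 0)"

definition diag_sqrt :: "real^'n^'n \<Rightarrow> real^'n^'n" where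
  "diag_sqrt A = (\<chi> i j. if i = j then sqrt (A $ i $ i) else 0)"

end

theory Submission
  imports Defs
begin

lemma mul_diag_right:
  fixes X D :: "real^'n^'n"
  assumes "diag_mat D" shows "(X ** D) $ i $ j = X $ i $ j * D $ j $ j"
proof -
  have "(X ** D) $ i $ j = (\<Sum>k\<in>UNIV. X $ i $ k * D $ k $ j)" by (simp add: matrix_matrix_mult_def)
  also have "\<dots> = (\<Sum>k\<in>{j}. X $ i $ k * D $ k $ j)"
    by (rule sum.mono_neutral_right) (use assms in \<open>auto simp: diag_mat_def\<close>)
  finally show ?thesis by simp
qed

lemma mul_diag_left:
  fixes X D :: "real^'n^'n"
  assumes "diag_mat D" shows "(D ** X) $ i $ j = D $ i $ i * X $ i $ j"
proof -
  have "(D ** X) $ i $ j = (\<Sum>k\<in>UNIV. D $ i $ k * X $ k $ j)" by (simp add: matrix_matrix_mult_def)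
  also have "\<dots> = (\<Sum>k\<in>{i}. D $ i $ k * X $ k $ j)"
    by (rule sum.mono_neutral_right) (use assms in \<open>auto simp: diag_mat_def\<close>)
  finally show ?thesis by simp
qed

lemma mul_entry: "((X::real^'n^'n) ** Y) $ i $ j = (\<Sum>k\<in>UNIV. X $ i $ k * Y $ k $ j)"
  by (simp add: matrix_matrix_mult_def)

lemma diag_sqrt_diag: "diag_mat (diag_sqrt A)" by (simp add: diag_mat_def diag_sqrt_def)
lemma diag_sqrt_entry: "diag_sqrt A $ i $ i = sqrt (A $ i $ i)" by (simp add: diag_sqrt_def)
lemma diag_I: "diag_mat (mat 1 :: real^'n^'n)" by (simp add: diag_mat_def mat_def)
lemma diag_diff: "diag_mat A \<Longrightarrow> diag_mat B \<Longrightarrow> diag_mat (A - B)" by (simp add: diag_mat_def)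
lemma diag_scale: "diag_mat A \<Longrightarrow> diag_mat (c *\<^sub>R A)" by (simp add: diag_mat_def)

lemma matrix_inv_diag:
  fixes M :: "real^'n^'n"
  assumes "diag_mat M" "\<forall>i. M $ i $ i > 0"
  shows "matrix_inv M = (\<chi> i j. if i = j then 1 / M $ i $ i else 0)" (is "_ = ?D")
proof -
  have dD: "diag_mat ?D" by (simp add: diag_mat_def)
  have 1: "M ** ?D = mat 1"
    using assms by (simp add: vec_eq_iff mul_diag_right[OF dD] mat_def diag_mat_def) (metis less_irrefl)
  have 2: "?D ** M = mat 1"
    using assms by (simp add: vec_eq_iff mul_diag_left[OF dD] mat_def diag_mat_def) (metis less_irrefl)
  have X: "M ** matrix_inv M = mat 1 \<and> matrix_inv M ** M = mat 1"
    unfolding matrix_inv_def by (rule someI[of _ ?D]) (use 1 2 in auto)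
  then have "matrix_inv M = matrix_inv M ** (M ** ?D)" by (simp add: 1)
  also have "\<dots> = ?D" using X by (simp add: matrix_mul_assoc)
  finally show ?thesis .
qed

lemma key:
  fixes s c m p a q Lik Ljk \<nu> au ay :: real and bi bj :: bool
  assumes c: "c = ay^2 * \<nu> + au^2" "c > 0" and m: "m > 0" and nu: "\<nu> > 0" "s = sqrt \<nu>"
    and "au \<ge> 0" "ay \<ge> 0"
    and p: "p = 0 \<or> p = 1"
    and a: "a = sqrt (1 - ay^2 * \<nu> / c * p)" and q: "q = sqrt (1 - au^2 / c * p)"
  shows "(s * Lik * a + (if bi then q * m else 0)) * (1/m) * (s * Ljk * a + (if bj then q * m else 0))
    = \<nu> * (Lik * (1/m) * Ljk)
      - (1/c) * ((ay * \<nu> * (Lik * (1/m)) - au * (if bi then 1 else 0)) * p * m * p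
                 * (ay * \<nu> * (Ljk * (1/m)) - au * (if bj then 1 else 0)))
      + ((if bj then (if bi then m else 0) + s * Lik * (1 - p) else 0)
         + (if bi then s * (1 - p) * Ljk else 0))"
proof -
  have ss: "s * s = \<nu>" using nu by simp
  consider "p = 0" | "p = 1" using p by blast
  then show ?thesis
  proof cases
    case 1
    then have "a = 1" "q = 1" using a q by auto
    then show ?thesis using 1 m ss by (cases bi; cases bj) (auto simp: field_simps)
  next
    case 2
    have e1: "1 - ay^2 * \<nu> / c = au^2 / c" using c by (simp add: field_simps)
    have e2: "1 - au^2 / c = ay^2 * \<nu> / c" using c by (simp add: field_simps)
    have aa: "a * a = au^2 / c" using a 2 e1 c by (simp add: real_sqrt_mult[symmetric])
    have qq: "q * q = ay^2 * \<nu> / c" using q 2 e2 c nu by (simp add: real_sqrt_mult[symmetric])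
    have aq: "a * q = au * ay * s / c"
    proof -
      have "a * q = sqrt (au^2 / c * (ay^2 * \<nu> / c))" using a q 2 e1 e2 by (simp only: real_sqrt_mult) simp
      also have "au^2 / c * (ay^2 * \<nu> / c) = (au * ay * s / c)^2"
        using nu by (simp add: power2_eq_square field_simps)
      also have "sqrt ((au * ay * s / c)^2) = au * ay * s / c"
        using assms nu by simp
      finally show ?thesis .
    qed
    have aa': "a * a * c = au^2" using aa c by (simp add: field_simps)
    have qq': "q * q * c = ay^2 * \<nu>" using qq c by (simp add: field_simps)
    have aq': "a * q * c = au * ay * s" using aq c by (simp add: field_simps)
    show ?thesis using 2 m c(2)
      apply (cases bi; cases bj)
      apply (simp_all add: field_simps)
      using aa' qq' aq' ss c(1) by algebra+
  qed
qed

theorem proposition4p1: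
  fixes M L Pi :: "real^'n^'n" and \<nu> \<alpha>u \<alpha>y :: real
  assumes "\<nu> > 0" and "\<alpha>u \<ge> 0" and "\<alpha>y \<ge> 0" and "max \<alpha>u \<alpha>y > 0"
    and "diag_mat M" and "\<forall>i. M $ i $ i > 0"
    and "diag_mat Pi" and "\<forall>i. Pi $ i $ i = 0 \<or> Pi $ i $ i = 1"
  shows
    "let c = \<alpha>y\<^sup>2 * \<nu> + \<alpha>u\<^sup>2;
         \<gamma>1 = \<alpha>y\<^sup>2 * \<nu> / c;
         \<gamma>2 = \<alpha>u\<^sup>2 / c;
         Mi = matrix_inv M;
         I = (mat 1 :: real^'n^'n);
         B = (\<alpha>y * \<nu>) *\<^sub>R (L ** Mi) - \<alpha>u *\<^sub>R I;
         S = \<nu> *\<^sub>R (L ** Mi ** transpose L) + M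
             - (1 / c) *\<^sub>R (B ** Pi ** M ** Pi ** transpose B);
         L1 = sqrt \<nu> *\<^sub>R (L ** diag_sqrt (I - \<gamma>1 *\<^sub>R Pi)) + diag_sqrt (I - \<gamma>2 *\<^sub>R Pi) ** M;
         Shat = L1 ** Mi ** transpose L1
     in Shat = S + sqrt \<nu> *\<^sub>R (L ** (I - Pi) + (I - Pi) ** transpose L)"
proof -
  define c where "c = \<alpha>y\<^sup>2 * \<nu> + \<alpha>u\<^sup>2"
  define \<gamma>1 where "\<gamma>1 = \<alpha>y\<^sup>2 * \<nu> / c"
  define \<gamma>2 where "\<gamma>2 = \<alpha>u\<^sup>2 / c"
  define Mi where "Mi = matrix_inv M"
  define I where "I = (mat 1 :: real^'n^'n)"
  define B where "B = (\<alpha>y * \<nu>) *\<^sub>R (L ** Mi) - \<alpha>u *\<^sub>R I"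
  define S where "S = \<nu> *\<^sub>R (L ** Mi ** transpose L) + M
             - (1 / c) *\<^sub>R (B ** Pi ** M ** Pi ** transpose B)"
  define L1 where "L1 = sqrt \<nu> *\<^sub>R (L ** diag_sqrt (I - \<gamma>1 *\<^sub>R Pi)) + diag_sqrt (I - \<gamma>2 *\<^sub>R Pi) ** M"
  define Shat where "Shat = L1 ** Mi ** transpose L1"
  define m where "m k = M $ k $ k" for k
  define p where "p k = Pi $ k $ k" for k
  define a where "a k = sqrt (1 - \<alpha>y\<^sup>2 * \<nu> / c * p k)" for k
  define q where "q k = sqrt (1 - \<alpha>u\<^sup>2 / c * p k)" for k
  have cpos: "c > 0"
  proof -
    have "\<alpha>u > 0 \<or> \<alpha>y > 0" using assms(4) by (auto simp: max_def split: if_splits)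
    then show ?thesis unfolding c_def using assms(1-3)
      by (auto intro: add_pos_nonneg add_nonneg_pos)
  qed
  have Mi_e: "Mi $ i $ j = (if i = j then 1 / m i else 0)" for i j
    unfolding Mi_def m_def using matrix_inv_diag[OF assms(5,6)] by simp
  have dMi: "diag_mat Mi" by (simp add: diag_mat_def Mi_e)
  have M_e: "M $ i $ j = (if i = j then m i else 0)" for i j
    using assms(5) by (auto simp: diag_mat_def m_def)
  have I_e: "I $ i $ j = (if i = j then 1 else 0)" for i j by (simp add: I_def mat_def)
  have dI: "diag_mat I" by (simp add: I_def diag_I)
  have dPi: "diag_mat (I - Pi)" by (rule diag_diff[OF dI assms(7)])
  have L1_e: "L1 $ i $ k = sqrt \<nu> * L $ i $ k * a k + (if i = k then q k * m k else 0)" for i k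
    unfolding L1_def
    by (simp add: mul_diag_right[OF diag_sqrt_diag] mul_diag_left[OF diag_sqrt_diag]
         diag_sqrt_entry I_e a_def q_def p_def \<gamma>1_def \<gamma>2_def M_e)
  have Shat_e: "Shat $ i $ j = (\<Sum>k\<in>UNIV. L1 $ i $ k * (1 / m k) * L1 $ j $ k)" for i j
    unfolding Shat_def mul_entry[of "L1 ** Mi"] by (simp add: mul_diag_right[OF dMi] Mi_e transpose_def)
  have B_e: "B $ i $ k = \<alpha>y * \<nu> * (L $ i $ k * (1 / m k)) - \<alpha>u * (if i = k then 1 else 0)" for i k
    unfolding B_def by (simp add: mul_diag_right[OF dMi] Mi_e I_e)
  have S_e: "S $ i $ j = \<nu> * (\<Sum>k\<in>UNIV. L $ i $ k * (1 / m k) * L $ j $ k) + M $ i $ j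
      - (1/c) * (\<Sum>k\<in>UNIV. B $ i $ k * p k * m k * p k * B $ j $ k)" for i j
  proof -
    have 1: "(L ** Mi ** transpose L) $ i $ j = (\<Sum>k\<in>UNIV. L $ i $ k * (1 / m k) * L $ j $ k)"
      unfolding mul_entry[of "L ** Mi"] by (simp add: mul_diag_right[OF dMi] Mi_e transpose_def)
    have 2: "(B ** Pi ** M ** Pi ** transpose B) $ i $ j = (\<Sum>k\<in>UNIV. B $ i $ k * p k * m k * p k * B $ j $ k)"
      unfolding mul_entry[of "B ** Pi ** M ** Pi"]
      by (simp add: mul_diag_right[OF assms(7)] mul_diag_right[OF assms(5)] transpose_def p_def m_def)
    show ?thesis unfolding S_def by (simp add: 1 2)
  qed
  have dummy: True by (simp add: mul_diag_right[OF dMi] mul_diag_right[OF assms(7)] mul_diag_right[OF assms(5)]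
        Mi_e transpose_def p_def m_def)
  have R_e: "(S + sqrt \<nu> *\<^sub>R (L ** (I - Pi) + (I - Pi) ** transpose L)) $ i $ j
     = S $ i $ j + sqrt \<nu> * (L $ i $ j * (1 - p j) + (1 - p i) * L $ j $ i)" for i j
    by (simp add: mul_diag_right[OF dPi] mul_diag_left[OF dPi] I_e p_def transpose_def)
  have main: "Shat $ i $ j = (S + sqrt \<nu> *\<^sub>R (L ** (I - Pi) + (I - Pi) ** transpose L)) $ i $ j" for i j
  proof -
    define E where "E k = ((if j = k then (if i = k then m k else 0) + sqrt \<nu> * L $ i $ k * (1 - p k) else 0)
         + (if i = k then sqrt \<nu> * (1 - p k) * L $ j $ k else 0))" for k
    have Esum: "(\<Sum>k\<in>UNIV. E k) = M $ i $ j + sqrt \<nu> * (L $ i $ j * (1 - p j) + (1 - p i) * L $ j $ i)"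
      unfolding E_def sum.distrib by (simp add: M_e algebra_simps)
    have "Shat $ i $ j = (\<Sum>k\<in>UNIV. \<nu> * (L $ i $ k * (1 / m k) * L $ j $ k)
        - (1/c) * (B $ i $ k * p k * m k * p k * B $ j $ k) + E k)"
      unfolding Shat_e
    proof (rule sum.cong[OF refl])
      fix k
      show "L1 $ i $ k * (1 / m k) * L1 $ j $ k = \<nu> * (L $ i $ k * (1 / m k) * L $ j $ k)
        - (1/c) * (B $ i $ k * p k * m k * p k * B $ j $ k) + E k"
        unfolding L1_e B_e E_def
        by (rule key[OF c_def cpos _ assms(1) refl assms(2,3) _ a_def[of k] q_def[of k]])
           (use assms(6,8) in \<open>auto simp: m_def p_def a_def\<close>)
    qed
    also have "\<dots> = S $ i $ j + sqrt \<nu> * (L $ i $ j * (1 - p j) + (1 - p i) * L $ j $ i)"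
    proof -
      have "(\<Sum>k\<in>UNIV. \<nu> * (L $ i $ k * (1 / m k) * L $ j $ k)
        - (1/c) * (B $ i $ k * p k * m k * p k * B $ j $ k) + E k)
        = \<nu> * (\<Sum>k\<in>UNIV. L $ i $ k * (1 / m k) * L $ j $ k)
          - (1/c) * (\<Sum>k\<in>UNIV. B $ i $ k * p k * m k * p k * B $ j $ k) + (\<Sum>k\<in>UNIV. E k)"
        by (simp only: sum.distrib sum_subtractf sum_distrib_left)
      then show ?thesis unfolding S_e Esum by simp
    qed
    finally show ?thesis by (simp only: R_e)
  qed
  have "Shat = S + sqrt \<nu> *\<^sub>R (L ** (I - Pi) + (I - Pi) ** transpose L)"
    using main by (simp add: vec_eq_iff)
  then show ?thesis
    unfolding Let_def c_def[symmetric] \<gamma>1_def[symmetric] \<gamma>2_def[symmetric] Mi_def[symmetric]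
      I_def[symmetric] B_def[symmetric] S_def[symmetric] L1_def[symmetric] Shat_def[symmetric] .
qed

end
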